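(* For all $y\in\{0,1\}^n$ and all $s_1,\dots,s_\ell\in\{0,1\}^n$, with $S=\{s_1,\dots,s_\ell\}$, $$\tilde G_y^2\,\hat a^\dagger_{s_1}\cdots\hat a^\dagger_{s_\ell}|\mathrm{vac}\rangle=\gamma_y^{(S)}\,\hat a^\dagger_{s_1}\cdots\hat a^\dagger_{s_\ell}|\mathrm{vac}\rangle.$$
   Context: Bosonic setting with $2^n$ modes indexed by $\{0,1\}^n$: position operators $\hat a_x,\hat a_x^\dagger$ with $[\hat a_x,\hat a_y^\dagger]=\delta_{xy}$, $[\hat a_x,\hat a_y]=[\hat a_x^\dagger,\hat a_y^\dagger]=0$, vacuum $|\mathrm{vac}\rangle$ annihilated by all $\hat a_x$; momentum operators $\tilde a_y=2^{-n/2}\sum_x(-1)^{x\cdot y}\hat a_x$, $\tilde a_y^\dagger=2^{-n/2}\sum_x(-1)^{x\cdot y}\hat a_x^\dagger$. Single $y$-momentum hopping operator $\tilde G_y=\frac1{\sqrt\ell}\sum_{x\in\{0,1\}^n}\tilde a^\dagger_{x\oplus y}\tilde a_x$. $\gamma_y^{(S)}=\frac1\ell\sum_{i,j\in[\ell]}(-1)^{y\cdot(s_i\oplus s_j)}$. *)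

theory Defs
  imports Complex_Main "HOL-Library.Multiset"
begin

type_synonym mode = "bool list"

definition modes :: "nat \<Rightarrow> mode set" where
  "modes n = {x. length x = n}"

definition bxor :: "mode \<Rightarrow> mode \<Rightarrow> mode" where
  "bxor x y = map2 (\<noteq>) x y"

(* inner product x.y mod 2 is encoded via the count of common 1 bits *)
definition bdot :: "mode \<Rightarrow> mode \<Rightarrow> nat" where
  "bdot x y = length (filter id (map2 (\<and>) x y))"

definition sgn_dot :: "mode \<Rightarrow> mode \<Rightarrow> complex" where
  "sgn_dot x y = (-1) ^ bdot x y"

(* Bosonic Fock space: vectors in the occupation-number basis, indexed by
   multisets of modes (occupation configurations). *)
type_synonym state = "mode multiset \<Rightarrow> complex"

definition vac :: state where
  "vac = (\<lambda>M. if M = {#} then 1 else 0)"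

definition cre :: "mode \<Rightarrow> state \<Rightarrow> state" where
  "cre x \<psi> = (\<lambda>M. if x \<in># M
      then complex_of_real (sqrt (real (count M x))) * \<psi> (M - {#x#}) else 0)"

definition ann :: "mode \<Rightarrow> state \<Rightarrow> state" where
  "ann x \<psi> = (\<lambda>M. complex_of_real (sqrt (real (count M x + 1))) * \<psi> (add_mset x M))"

definition mom_ann :: "nat \<Rightarrow> mode \<Rightarrow> state \<Rightarrow> state" where
  "mom_ann n y \<psi> = (\<lambda>M. complex_of_real (2 powr (- real n / 2)) *
      (\<Sum>x\<in>modes n. sgn_dot x y * ann x \<psi> M))"

definition mom_cre :: "nat \<Rightarrow> mode \<Rightarrow> state \<Rightarrow> state" where
  "mom_cre n y \<psi> = (\<lambda>M. complex_of_real (2 powr (- real n / 2)) *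
      (\<Sum>x\<in>modes n. sgn_dot x y * cre x \<psi> M))"

definition hop :: "nat \<Rightarrow> nat \<Rightarrow> mode \<Rightarrow> state \<Rightarrow> state" where
  "hop n l y \<psi> = (\<lambda>M. complex_of_real (1 / sqrt (real l)) *
      (\<Sum>x\<in>modes n. mom_cre n (bxor x y) (mom_ann n x \<psi>) M))"

definition gamma :: "mode \<Rightarrow> mode list \<Rightarrow> complex" where
  "gamma y ss = complex_of_real (1 / real (length ss)) *
      (\<Sum>i<length ss. \<Sum>j<length ss. sgn_dot y (bxor (ss ! i) (ss ! j)))"

definition cre_list :: "mode list \<Rightarrow> state" where
  "cre_list ss = foldr cre ss vac"

end

theory Submission
  imports Defs
begin

lemma bdot_Cons[simp]: "bdot (a#x) (b#y) = (if a \<and> b then 1 else 0) + bdot x y"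
  by (simp add: bdot_def)
lemma bdot_Nil1[simp]: "bdot [] y = 0" by (simp add: bdot_def)
lemma bdot_Nil2[simp]: "bdot x [] = 0" by (simp add: bdot_def)

lemma bdot_comm: "bdot x y = bdot y x"
proof (induction x arbitrary: y)
  case Nil then show ?case by simp
next
  case (Cons a x) then show ?case by (cases y) auto
qed

lemma bxor_Cons[simp]: "bxor (a#x) (b#y) = (a \<noteq> b) # bxor x y"
  by (simp add: bxor_def)
lemma bxor_Nil1[simp]: "bxor [] y = []" by (simp add: bxor_def)

lemma sgn_dot_Cons[simp]: "sgn_dot (a#x) (b#y) = (if a \<and> b then -1 else 1) * sgn_dot x y"
  by (simp add: sgn_dot_def)

lemma sgn_dot_comm: "sgn_dot x y = sgn_dot y x"
  by (simp add: sgn_dot_def bdot_comm)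

lemma sgn_dot_bxor:
  "length x = length y \<Longrightarrow> sgn_dot u (bxor x y) = sgn_dot u x * sgn_dot u y"
proof (induction u arbitrary: x y)
  case Nil then show ?case by (simp add: sgn_dot_def)
next
  case (Cons a u)
  show ?case
  proof (cases x)
    case Nil then show ?thesis using Cons.prems by (simp add: sgn_dot_def)
  next
    case (Cons b x')
    then obtain c y' where y: "y = c # y'" using Cons.prems by (cases y) auto
    show ?thesis using Cons.IH[of x' y'] Cons.prems y \<open>x = b # x'\<close> by auto
  qed
qed

lemma modes_Suc: "modes (Suc n) = (Cons True) ` modes n \<union> (Cons False) ` modes n"
proof -
  have "x \<in> modes (Suc n) \<Longrightarrow> x \<in> (Cons True) ` modes n \<union> (Cons False) ` modes n" for x
    by (cases x) (auto simp: modes_def)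
  then show ?thesis by (auto simp: modes_def)
qed

lemma finite_modes[simp]: "finite (modes n)"
proof (induction n)
  case 0 have "modes 0 = {[]}" by (auto simp: modes_def)
  then show ?case by simp
next
  case (Suc n) then show ?case by (simp add: modes_Suc)
qed

lemma orth:
  "u \<in> modes n \<Longrightarrow> v \<in> modes n \<Longrightarrow>
   (\<Sum>x\<in>modes n. sgn_dot u x * sgn_dot v x) = (if u = v then 2 ^ n else 0)"
proof (induction n arbitrary: u v)
  case 0 then show ?case by (simp add: modes_def sgn_dot_def)
next
  case (Suc n)
  obtain a u' where u: "u = a # u'" "u' \<in> modes n" using Suc.prems by (cases u) (auto simp: modes_def)
  obtain b v' where v: "v = b # v'" "v' \<in> modes n" using Suc.prems by (cases v) (auto simp: modes_def)
  have "(\<Sum>x\<in>modes (Suc n). sgn_dot u x * sgn_dot v x)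
     = (\<Sum>x\<in>modes n. sgn_dot u (True#x) * sgn_dot v (True#x))
       + (\<Sum>x\<in>modes n. sgn_dot u (False#x) * sgn_dot v (False#x))"
    unfolding modes_Suc
    by (subst sum.union_disjoint) (auto simp: sum.reindex)
  also have "\<dots> = ((if a then -1 else 1) * (if b then -1 else 1) + 1) *
      (\<Sum>x\<in>modes n. sgn_dot u' x * sgn_dot v' x)"
    by (simp add: u v sum_distrib_left algebra_simps sum.distrib)
  also have "\<dots> = (if u = v then 2 ^ Suc n else 0)"
    using Suc.IH[OF u(2) v(2)] u v by auto
  finally show ?case .
qed


lemma cre_lin: "cre u (\<lambda>M. k * (\<Sum>v\<in>A. f v * g v M)) M = k * (\<Sum>v\<in>A. f v * cre u (g v) M)"
  by (simp add: cre_def sum_distrib_left mult_ac)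

lemma cre_ann: "cre u (ann u \<psi>) M = of_nat (count M u) * \<psi> M"
proof -
  have True by simp
  show ?thesis
  proof (cases "u \<in># M")
    case T: True
    have "complex_of_real (sqrt (real (count M u))) * complex_of_real (sqrt (real (count M u)))
       = of_nat (count M u)"
      by (simp flip: of_real_mult)
    moreover have "count (M - {#u#}) u + 1 = count M u" using T by (simp add: in_countE)
    ultimately show ?thesis using T by (simp add: cre_def ann_def insert_DiffM)
  next
    case False then show ?thesis by (simp add: cre_def ann_def not_in_iff)
  qed
qed

lemma two_powr: "complex_of_real (2 powr (- real n / 2)) * complex_of_real (2 powr (- real n / 2)) * 2 ^ n = 1"
proof -
  have "(2::real) powr (- real n / 2) * 2 powr (- real n / 2) * 2 ^ n = 1"
    by (simp add: powr_add [symmetric] powr_minus powr_realpow divide_simps)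
  then have "complex_of_real ((2::real) powr (- real n / 2) * 2 powr (- real n / 2) * 2 ^ n) = 1"
    by simp
  then show ?thesis by simp
qed

lemma hop_eq:
  assumes y: "y \<in> modes n"
  shows "hop n l y \<psi> M = complex_of_real (1 / sqrt (real l)) *
     ((\<Sum>u\<in>modes n. sgn_dot u y * of_nat (count M u)) * \<psi> M)"
proof -
  define c where "c = complex_of_real (2 powr (- real n / 2))"
  have A: "mom_cre n (bxor x y) (mom_ann n x \<psi>) M = c * c *
      (\<Sum>u\<in>modes n. \<Sum>v\<in>modes n. (sgn_dot u (bxor x y) * sgn_dot v x) * cre u (ann v \<psi>) M)" for x
  proof -
    have "mom_ann n x \<psi> = (\<lambda>M. c * (\<Sum>v\<in>modes n. sgn_dot v x * ann v \<psi> M))"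
      by (simp add: mom_ann_def c_def)
    then have "mom_cre n (bxor x y) (mom_ann n x \<psi>) M = c *
       (\<Sum>u\<in>modes n. sgn_dot u (bxor x y) * (c * (\<Sum>v\<in>modes n. sgn_dot v x * cre u (ann v \<psi>) M)))"
      by (simp only: mom_cre_def cre_lin flip: c_def)
    also have "\<dots> = c * c *
      (\<Sum>u\<in>modes n. \<Sum>v\<in>modes n. (sgn_dot u (bxor x y) * sgn_dot v x) * cre u (ann v \<psi>) M)"
      unfolding sum_distrib_left by (intro sum.cong refl) (simp only: mult_ac)
    finally show ?thesis .
  qed
  have B: "(\<Sum>x\<in>modes n. sgn_dot u (bxor x y) * sgn_dot v x) = sgn_dot u y * (if u = v then 2 ^ n else 0)"
    if "u \<in> modes n" "v \<in> modes n" for u v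
  proof -
    have "(\<Sum>x\<in>modes n. sgn_dot u (bxor x y) * sgn_dot v x) = sgn_dot u y * (\<Sum>x\<in>modes n. sgn_dot u x * sgn_dot v x)"
      using y by (auto simp: sgn_dot_bxor modes_def sum_distrib_left mult_ac intro!: sum.cong)
    then show ?thesis using orth[OF that] by simp
  qed
  have "(\<Sum>x\<in>modes n. mom_cre n (bxor x y) (mom_ann n x \<psi>) M)
      = c * c * (\<Sum>x\<in>modes n. \<Sum>u\<in>modes n. \<Sum>v\<in>modes n. (sgn_dot u (bxor x y) * sgn_dot v x) * cre u (ann v \<psi>) M)"
    by (simp add: A sum_distrib_left)
  also have "(\<Sum>x\<in>modes n. \<Sum>u\<in>modes n. \<Sum>v\<in>modes n. (sgn_dot u (bxor x y) * sgn_dot v x) * cre u (ann v \<psi>) M)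
     = (\<Sum>u\<in>modes n. \<Sum>x\<in>modes n. \<Sum>v\<in>modes n. (sgn_dot u (bxor x y) * sgn_dot v x) * cre u (ann v \<psi>) M)"
    by (rule sum.swap)
  also have "\<dots> = (\<Sum>u\<in>modes n. \<Sum>v\<in>modes n. \<Sum>x\<in>modes n. (sgn_dot u (bxor x y) * sgn_dot v x) * cre u (ann v \<psi>) M)"
    by (rule sum.cong[OF refl], rule sum.swap)
  also have "\<dots> = (\<Sum>u\<in>modes n. \<Sum>v\<in>modes n. (\<Sum>x\<in>modes n. sgn_dot u (bxor x y) * sgn_dot v x) * cre u (ann v \<psi>) M)"
    by (intro sum.cong refl) (simp only: sum_distrib_right)
  also have "\<dots> = (\<Sum>u\<in>modes n. \<Sum>v\<in>modes n. (sgn_dot u y * (if u = v then 2 ^ n else 0)) * cre u (ann v \<psi>) M)"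
    by (intro sum.cong refl) (simp add: B)
  also have "\<dots> = (\<Sum>u\<in>modes n. sgn_dot u y * 2 ^ n * (of_nat (count M u) * \<psi> M))"
  proof (rule sum.cong[OF refl])
    fix u assume u: "u \<in> modes n"
    have "(\<Sum>v\<in>modes n. (sgn_dot u y * (if u = v then 2 ^ n else 0)) * cre u (ann v \<psi>) M)
       = (\<Sum>v\<in>modes n. if u = v then sgn_dot u y * 2 ^ n * cre u (ann v \<psi>) M else 0)"
      by (rule sum.cong[OF refl]) simp
    also have "\<dots> = sgn_dot u y * 2 ^ n * cre u (ann u \<psi>) M"
      using u by (simp add: sum.delta)
    finally show "(\<Sum>v\<in>modes n. (sgn_dot u y * (if u = v then 2 ^ n else 0)) * cre u (ann v \<psi>) M)
       = sgn_dot u y * 2 ^ n * (of_nat (count M u) * \<psi> M)" by (simp add: cre_ann)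
  qed
  finally have "(\<Sum>x\<in>modes n. mom_cre n (bxor x y) (mom_ann n x \<psi>) M)
     = (c * c * 2 ^ n) * ((\<Sum>u\<in>modes n. sgn_dot u y * of_nat (count M u)) * \<psi> M)"
    by (simp add: sum_distrib_left sum_distrib_right mult_ac)
  also have "c * c * 2 ^ n = 1" unfolding c_def by (rule two_powr)
  finally show ?thesis by (simp add: hop_def)
qed


lemma cre_list_supp: "cre_list ss M \<noteq> 0 \<Longrightarrow> M = mset ss"
proof (induction ss arbitrary: M)
  case Nil then show ?case by (simp add: cre_list_def vac_def split: if_splits)
next
  case (Cons s ss)
  have "cre s (cre_list ss) M \<noteq> 0" using Cons.prems by (simp add: cre_list_def)
  then have "s \<in># M" "cre_list ss (M - {#s#}) \<noteq> 0" by (auto simp: cre_def split: if_splits)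
  then have "s \<in># M" "M - {#s#} = mset ss" using Cons.IH by auto
  then show ?case by (metis insert_DiffM mset.simps(2))
qed

lemma count_sum:
  assumes "finite A" "set ss \<subseteq> A"
  shows "(\<Sum>u\<in>A. g u * of_nat (count (mset ss) u)) = (\<Sum>i<length ss. (g (ss ! i) :: complex))"
  using assms(2)
proof (induction ss)
  case Nil then show ?case by simp
next
  case (Cons s ss)
  have "(\<Sum>u\<in>A. g u * of_nat (count (mset (s # ss)) u))
     = (\<Sum>u\<in>A. g u * of_nat (count (mset ss) u)) + (\<Sum>u\<in>A. if u = s then g u else 0)"
    by (auto simp: sum.distrib[symmetric] algebra_simps intro!: sum.cong)
  also have "\<dots> = (\<Sum>i<length ss. g (ss ! i)) + g s"
    using Cons assms(1) by (simp add: sum.delta')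
  also have "\<dots> = (\<Sum>i<length (s # ss). g ((s # ss) ! i))"
    by (simp add: sum.lessThan_Suc_shift del: sum.lessThan_Suc)
  finally show ?case .
qed

theorem mainTheorem10:
  fixes n :: nat and y :: mode and ss :: "mode list"
  assumes "y \<in> modes n" and "\<forall>s\<in>set ss. s \<in> modes n"
  shows "hop n (length ss) y (hop n (length ss) y (cre_list ss))
           = (\<lambda>M. gamma y ss * cre_list ss M)"
proof
  fix M
  define l where "l = length ss"
  define k where "k = complex_of_real (1 / sqrt (real l))"
  define f where "f = (\<Sum>u\<in>modes n. sgn_dot u y * of_nat (count M u))"
  have "hop n l y (hop n l y (cre_list ss)) M = k * k * (f * f) * cre_list ss M"
    unfolding hop_eq[OF assms(1)] k_def f_def by (simp add: mult_ac)
  also have "\<dots> = gamma y ss * cre_list ss M"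
  proof (cases "cre_list ss M = 0")
    case True then show ?thesis by simp
  next
    case False
    then have M: "M = mset ss" by (rule cre_list_supp)
    have ssA: "set ss \<subseteq> modes n" using assms(2) by auto
    have f: "f = (\<Sum>i<l. sgn_dot y (ss ! i))"
      unfolding f_def M l_def using count_sum[OF finite_modes ssA, of "\<lambda>u. sgn_dot u y"]
      by (simp add: sgn_dot_comm)
    have len: "i < l \<Longrightarrow> length (ss ! i) = n" for i
      using assms(2) by (auto simp: l_def modes_def)
    have ff: "f * f = (\<Sum>i<l. \<Sum>j<l. sgn_dot y (bxor (ss ! i) (ss ! j)))"
      unfolding f sum_product
      by (intro sum.cong refl) (simp add: sgn_dot_bxor len)
    have kk: "k * k = complex_of_real (1 / real l)"
      unfolding k_def by (simp flip: of_real_mult)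
    show ?thesis unfolding kk ff gamma_def l_def by simp
  qed
  finally show "hop n (length ss) y (hop n (length ss) y (cre_list ss)) M = gamma y ss * cre_list ss M"
    by (simp add: l_def)
qed

end
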